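(* Let $n\ge 6$ and let $T$ be a tree on $n$ vertices with maximum degree $n-3$. Then $\rho_{ABC}(T)<\sqrt{n-3.5}$.
   Context: For a simple connected graph $G$ with vertex set $\{v_1,\dots,v_n\}$ and degrees $d_i$, the ABC matrix is $M(G)=(m_{ij})_{n\times n}$ with $m_{ij}=\sqrt{(d_i+d_j-2)/(d_id_j)}$ if $v_iv_j$ is an edge and $m_{ij}=0$ otherwise. The ABC spectral radius $\rho_{ABC}(G)$ is the largest eigenvalue of $M(G)$. (The paper states this for its three trees $T_2,T_3,T_4$, which are exactly the trees on $n$ vertices with maximum degree $n-3$: a vertex of degree $n-3$ together with two further vertices attached either as two leaves at one neighbor, as leaves at two distinct neighbors, or as a path of length two hanging from one neighbor.) *)

theory Defs
  imports "HOL-Analysis.Analysis"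
begin

definition simple_graph :: "('a \<Rightarrow> 'a \<Rightarrow> bool) \<Rightarrow> bool" where
  "simple_graph E \<longleftrightarrow> (\<forall>u v. E u v \<longrightarrow> E v u) \<and> (\<forall>v. \<not> E v v)"

definition connected_graph :: "('a \<Rightarrow> 'a \<Rightarrow> bool) \<Rightarrow> bool" where
  "connected_graph E \<longleftrightarrow> (\<forall>u v. E\<^sup>*\<^sup>* u v)"

definition is_cycle :: "('a \<Rightarrow> 'a \<Rightarrow> bool) \<Rightarrow> 'a list \<Rightarrow> bool" where
  "is_cycle E cs \<longleftrightarrow> length cs \<ge> 3 \<and> distinct cs
     \<and> (\<forall>i. Suc i < length cs \<longrightarrow> E (cs ! i) (cs ! Suc i))
     \<and> E (last cs) (hd cs)"

definition acyclic_graph :: "('a \<Rightarrow> 'a \<Rightarrow> bool) \<Rightarrow> bool" where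
  "acyclic_graph E \<longleftrightarrow> (\<nexists>cs. is_cycle E cs)"

definition is_tree :: "('a \<Rightarrow> 'a \<Rightarrow> bool) \<Rightarrow> bool" where
  "is_tree E \<longleftrightarrow> simple_graph E \<and> connected_graph E \<and> acyclic_graph E"

definition deg :: "('a \<Rightarrow> 'a \<Rightarrow> bool) \<Rightarrow> 'a \<Rightarrow> nat" where
  "deg E v = card {u. E v u}"

definition max_degree :: "('a::finite \<Rightarrow> 'a \<Rightarrow> bool) \<Rightarrow> nat" where
  "max_degree E = Max (range (deg E))"

definition abc_matrix :: "('a::finite \<Rightarrow> 'a \<Rightarrow> bool) \<Rightarrow> real^'a^'a" where
  "abc_matrix E = (\<chi> i j. if E i j
      then sqrt ((real (deg E i) + real (deg E j) - 2) / (real (deg E i) * real (deg E j)))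
      else 0)"

definition real_eigenvalues :: "real^'n^'n \<Rightarrow> real set" where
  "real_eigenvalues A = {c. \<exists>x. x \<noteq> 0 \<and> A *v x = c *\<^sub>R x}"

definition abc_spectral_radius :: "('a::finite \<Rightarrow> 'a \<Rightarrow> bool) \<Rightarrow> real" where
  "abc_spectral_radius E = Max (real_eigenvalues (abc_matrix E))"

end

theory Submission
  imports Defs
begin

lemma cert:
  fixes A :: "real^'n^'n" and y :: "'n \<Rightarrow> real"
  assumes nonneg: "\<And>i j. 0 \<le> A$i$j" and ypos: "\<And>i. 0 < y i"
    and row: "\<And>i. (\<Sum>j\<in>UNIV. A$i$j * y j) \<le> t * y i"
    and ev: "A *v x = c *\<^sub>R x" and nz: "x \<noteq> 0"
  shows "c \<le> t"
proof -
  define r where "r j = \<bar>x$j\<bar> / y j" for j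
  have "Max (range r) \<in> range r" by (rule Max_in) auto
  then obtain i0 where i0def: "Max (range r) = r i0" by blast
  have i0: "r j \<le> r i0" for j unfolding i0def[symmetric] by (rule Max_ge) auto
  obtain j0 where "x$j0 \<noteq> 0" using nz by (metis vec_eq_iff zero_index)
  hence "r j0 > 0" using ypos[of j0] by (simp add: r_def)
  hence R: "r i0 > 0" using i0[of j0] by linarith
  have bnd: "\<bar>x$j\<bar> \<le> r i0 * y j" for j
    using i0[of j] ypos[of j] by (simp add: r_def field_simps)
  have xi0: "\<bar>x$i0\<bar> = r i0 * y i0" using ypos[of i0] by (simp add: r_def)
  have "\<bar>c\<bar> * \<bar>x$i0\<bar> = \<bar>(A *v x)$i0\<bar>" using ev by (simp add: abs_mult)
  also have "\<dots> = \<bar>\<Sum>j\<in>UNIV. A$i0$j * x$j\<bar>" by (simp add: matrix_vector_mult_def)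
  also have "\<dots> \<le> (\<Sum>j\<in>UNIV. A$i0$j * \<bar>x$j\<bar>)"
    by (rule order_trans[OF sum_abs]) (simp add: abs_mult nonneg)
  also have "\<dots> \<le> (\<Sum>j\<in>UNIV. A$i0$j * (r i0 * y j))"
    by (rule sum_mono) (simp add: mult_left_mono nonneg bnd)
  also have "\<dots> = r i0 * (\<Sum>j\<in>UNIV. A$i0$j * y j)"
    by (simp add: sum_distrib_left algebra_simps)
  also have "\<dots> \<le> r i0 * (t * y i0)" using row[of i0] R by simp
  also have "\<dots> = t * \<bar>x$i0\<bar>" using xi0 by simp
  finally have "\<bar>c\<bar> * \<bar>x$i0\<bar> \<le> t * \<bar>x$i0\<bar>" .
  moreover have "\<bar>x$i0\<bar> > 0" using xi0 R ypos[of i0] by simp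
  ultimately show ?thesis by simp
qed

lemma finite_eig:
  fixes A :: "real^'n^'n"
  assumes sym: "transpose A = A"
  shows "finite (real_eigenvalues A)"
proof -
  let ?S = "real_eigenvalues A"
  define f where "f c = (SOME x. x \<noteq> 0 \<and> A *v x = c *\<^sub>R x)" for c
  have fS: "f c \<noteq> 0 \<and> A *v f c = c *\<^sub>R f c" if "c \<in> ?S" for c
    using that unfolding real_eigenvalues_def f_def by (rule CollectE) (rule someI_ex)
  have symm: "inner (A *v x) y = inner x (A *v y)" for x y
  proof -
    have "A *v x = x v* A" using sym by (metis transpose_matrix_vector)
    thus ?thesis by (simp add: dot_lmul_matrix)
  qed
  have orth: "inner (f c1) (f c2) = 0" if "c1 \<in> ?S" "c2 \<in> ?S" "c1 \<noteq> c2" for c1 c2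
  proof -
    have "c1 * inner (f c1) (f c2) = inner (A *v f c1) (f c2)" using fS[OF that(1)] by simp
    also have "\<dots> = inner (f c1) (A *v f c2)" by (rule symm)
    also have "\<dots> = c2 * inner (f c1) (f c2)" using fS[OF that(2)] by simp
    finally show ?thesis using that(3) by simp
  qed
  have inj: "inj_on f ?S"
  proof (rule inj_onI)
    fix c1 c2 assume h: "c1 \<in> ?S" "c2 \<in> ?S" "f c1 = f c2"
    show "c1 = c2"
    proof (rule ccontr)
      assume "c1 \<noteq> c2"
      hence "inner (f c1) (f c1) = 0" using orth[OF h(1,2)] h(3) by simp
      thus False using fS[OF h(1)] by simp
    qed
  qed
  have "pairwise orthogonal (f ` ?S)"
    unfolding pairwise_def orthogonal_def using orth by fastforce
  moreover have "0 \<notin> f ` ?S" using fS by auto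
  ultimately have "independent (f ` ?S)" by (rule pairwise_orthogonal_independent)
  hence "finite (f ` ?S)" using independent_bound by blast
  thus ?thesis using inj finite_imageD by blast
qed

definition wt :: "nat \<Rightarrow> nat \<Rightarrow> real" where
  "wt p q = sqrt ((real p + real q - 2) / (real p * real q))"

lemma abc_row:
  "(\<Sum>j\<in>UNIV. abc_matrix E $ i $ j * y j) = (\<Sum>j\<in>{j. E i j}. wt (deg E i) (deg E j) * y j)"
proof -
  have "(\<Sum>j\<in>UNIV. abc_matrix E $ i $ j * y j) = (\<Sum>j\<in>UNIV. if E i j then wt (deg E i) (deg E j) * y j else 0)"
    by (rule sum.cong) (auto simp: abc_matrix_def wt_def)
  also have "\<dots> = (\<Sum>j\<in>{j. E i j}. wt (deg E i) (deg E j) * y j)"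
    by (simp add: sum.inter_filter[symmetric])
  finally show ?thesis .
qed

lemma deg_pos: "E i j \<Longrightarrow> deg E (i::'a::finite) \<ge> 1"
  unfolding deg_def by (metis (mono_tags) One_nat_def Suc_leI card_gt_0_iff empty_iff finite mem_Collect_eq)

lemma abc_nonneg: assumes "\<And>x y. E x y \<Longrightarrow> E y x" shows "0 \<le> abc_matrix E $ i $ (j::'a::finite)"
proof (cases "E i j")
  case True
  hence "deg E i \<ge> 1" "deg E j \<ge> 1" using deg_pos assms by blast+
  thus ?thesis using True unfolding abc_matrix_def by simp
qed (simp add: abc_matrix_def)

lemma abc_sym: assumes "\<And>x y. E x y \<Longrightarrow> E y x" shows "transpose (abc_matrix E) = abc_matrix E"
  unfolding abc_matrix_def transpose_def using assms
  by (simp add: vec_eq_iff) (metis add.commute mult.commute)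

lemma wt_sym: "wt p q = wt q p" unfolding wt_def by (simp add: add.commute mult.commute)

lemma wt_d1: "d \<ge> 1 \<Longrightarrow> wt d 1 = sqrt ((real d - 1) / real d)" unfolding wt_def by simp
lemma wt_d2: "d \<ge> 1 \<Longrightarrow> wt d 2 = sqrt (1/2)" unfolding wt_def by simp
lemma wt_d3: "d \<ge> 1 \<Longrightarrow> wt d 3 = sqrt ((real d + 1) / (3 * real d))" unfolding wt_def by (simp add: algebra_simps)
lemma wt_31: "wt 3 1 = sqrt (2/3)" unfolding wt_def by simp

lemma K4: fixes d :: real assumes "d \<ge> 3"
  shows "((2*(d-3/5)-1)/(2*(d-3/5)-2))/2 + (d-1)*(d-1)/d \<le> d - 3/5"
proof -
  have p: "2*(d-3/5)-2 > 0" "d > 0" using assms by auto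
  have h: "d*d \<ge> 3*d" using assms by (simp add: mult_right_mono)
  have e: "(2*(d-3/5)-1)*d + 2*(d-1)*(d-1)*(2*(d-3/5)-2) - 2*(d-3/5)*d*(2*(d-3/5)-2) = -(18/5)*(d*d) + (269/25)*d - 32/5"
    by (simp add: algebra_simps)
  have "(2*(d-3/5)-1)*d + 2*(d-1)*(d-1)*(2*(d-3/5)-2) - 2*(d-3/5)*d*(2*(d-3/5)-2) \<le> 0"
    unfolding e using h assms by linarith
  hence key: "(2*(d-3/5)-1)*d + 2*(d-1)*(d-1)*(2*(d-3/5)-2) \<le> 2*(d-3/5)*d*(2*(d-3/5)-2)" by simp
  have l: "((2*(d-3/5)-1)/(2*(d-3/5)-2))/2 + (d-1)*(d-1)/d = ((2*(d-3/5)-1)*d + 2*(d-1)*(d-1)*(2*(d-3/5)-2)) / (2*d*(2*(d-3/5)-2))" (is "_ = ?N / ?D")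
    using p by (simp add: field_simps)
  have r: "d - 3/5 = (2*(d-3/5)*d*(2*(d-3/5)-2)) / (2*d*(2*(d-3/5)-2))" (is "_ = ?R / _")
    using p by (simp add: field_simps)
  have "?N/?D \<le> ?R/?D" by (rule divide_right_mono[OF key]) (use p in simp)
  then show ?thesis using l r by linarith
qed

lemma K3: fixes d :: real assumes "d \<ge> 3"
  shows "(d-2)*(d-1)/d + (d-3/5)/(d-3/5-1/2) \<le> d - 3/5"
proof -
  have p: "d-3/5-1/2 > 0" "d > 0" using assms by auto
  have h: "d*d \<ge> 3*d" using assms by (simp add: mult_right_mono)
  have e: "(d-2)*(d-1)*(d-3/5-1/2) + (d-3/5)*d - (d-3/5)*d*(d-3/5-1/2) = -(7/5)*(d*d) + (101/25)*d - 11/5"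
    by (simp add: algebra_simps)
  have "(d-2)*(d-1)*(d-3/5-1/2) + (d-3/5)*d - (d-3/5)*d*(d-3/5-1/2) \<le> 0"
    unfolding e using h assms by linarith
  hence key: "(d-2)*(d-1)*(d-3/5-1/2) + (d-3/5)*d \<le> (d-3/5)*d*(d-3/5-1/2)" by simp
  have l: "(d-2)*(d-1)/d + (d-3/5)/(d-3/5-1/2) = ((d-2)*(d-1)*(d-3/5-1/2) + (d-3/5)*d) / (d*(d-3/5-1/2))" (is "_ = ?N / ?D")
    using p by (simp add: field_simps)
  have r: "d - 3/5 = ((d-3/5)*d*(d-3/5-1/2)) / (d*(d-3/5-1/2))" (is "_ = ?R / _")
    using p by (simp add: field_simps)
  have "?N/?D \<le> ?R/?D" by (rule divide_right_mono[OF key]) (use p in simp)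
  then show ?thesis using l r by linarith
qed

lemma K2: fixes d :: real assumes "d \<ge> 3"
  shows "(d-1)*(d-1)/d + ((d+1)/(3*d)) * ((d-3/5)/(d-3/5-4/3)) \<le> d - 3/5"
proof -
  have p: "d-3/5-4/3 > 0" "d > 0" using assms by auto
  have h: "(d-3)*(d-3) \<ge> 0" by simp
  have e: "3*(d-1)*(d-1)*(d-3/5-4/3) + (d+1)*(d-3/5) - 3*(d-3/5)*d*(d-3/5-4/3) = -(16/5)*((d-3)*(d-3)) - (192/25)*d + 112/5"
    by (simp add: field_simps)
  have "3*(d-1)*(d-1)*(d-3/5-4/3) + (d+1)*(d-3/5) - 3*(d-3/5)*d*(d-3/5-4/3) \<le> 0"
    unfolding e using h assms by linarith
  hence key: "3*(d-1)*(d-1)*(d-3/5-4/3) + (d+1)*(d-3/5) \<le> 3*(d-3/5)*d*(d-3/5-4/3)" by simp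
  have l: "(d-1)*(d-1)/d + ((d+1)/(3*d)) * ((d-3/5)/(d-3/5-4/3)) = (3*(d-1)*(d-1)*(d-3/5-4/3) + (d+1)*(d-3/5)) / (3*d*(d-3/5-4/3))" (is "_ = ?N / ?D")
    using p by (simp add: field_simps)
  have r: "d - 3/5 = (3*(d-3/5)*d*(d-3/5-4/3)) / (3*d*(d-3/5-4/3))" (is "_ = ?R / _")
    using p by (simp add: field_simps)
  have "?N/?D \<le> ?R/?D" by (rule divide_right_mono[OF key]) (use p in simp)
  then show ?thesis using l r by linarith
qed

lemma zero_eig:
  fixes E :: "'a::finite \<Rightarrow> 'a \<Rightarrow> bool"
  assumes "l1 \<noteq> l2" "\<And>i. E i l1 = E i l2" "deg E l1 = deg E l2"
  shows "0 \<in> real_eigenvalues (abc_matrix E)"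
proof -
  let ?x = "axis l1 (1::real) - axis l2 1"
  have "?x $ l1 = 1" using assms(1) by (simp add: axis_def)
  have nz: "?x \<noteq> 0"
  proof
    assume "?x = 0" hence "?x $ l1 = 0" by simp
    with \<open>?x $ l1 = 1\<close> show False by simp
  qed
  have "column l1 (abc_matrix E) = column l2 (abc_matrix E)"
    unfolding column_def abc_matrix_def using assms(2,3) by (simp add: vec_eq_iff)
  hence "abc_matrix E *v ?x = 0 *\<^sub>R ?x"
    by (simp add: matrix_vector_mult_diff_distrib matrix_vector_mult_basis)
  thus ?thesis using nz unfolding real_eigenvalues_def by blast
qed

lemma card2_ex: assumes "card S \<ge> 2" obtains x y where "x \<in> S" "y \<in> S" "x \<noteq> y"
proof -
  have "finite S" using assms by (metis card.infinite not_numeral_le_zero)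
  then obtain x where "x \<in> S" using assms by fastforce
  moreover have "card (S - {x}) \<ge> 1" using assms \<open>x \<in> S\<close> \<open>finite S\<close> by simp
  then obtain y where "y \<in> S - {x}" by (metis card.empty ex_in_conv not_one_le_zero)
  ultimately show ?thesis using that by blast
qed

lemma shape4:
  fixes E :: "'a::finite \<Rightarrow> 'a \<Rightarrow> bool"
  assumes adj: "\<And>x y. E x y \<longleftrightarrow> (x=v \<and> y\<in>N) \<or> (y=v \<and> x\<in>N) \<or> (x=u \<and> y=a) \<or> (x=a \<and> y=u) \<or> (x=a \<and> y=b) \<or> (x=b \<and> y=a)"
    and uN: "u\<in>N" and vN: "v\<notin>N" and aN: "a\<notin>N" and bN: "b\<notin>N"
    and av: "a\<noteq>v" and bv: "b\<noteq>v" and ab: "a\<noteq>b" and cN: "card N = d" and d3: "d\<ge>3"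
  shows "(\<forall>c\<in>real_eigenvalues (abc_matrix E). c \<le> sqrt (real d - 3/5)) \<and> real_eigenvalues (abc_matrix E) \<noteq> {}"
proof -
  have sym: "\<And>x y. E x y \<Longrightarrow> E y x" using adj by blast
  have uv: "u \<noteq> v" using uN vN by auto
  have ua: "u \<noteq> a" "u \<noteq> b" using uN aN bN by auto
  have nv: "{j. E v j} = N" using adj vN uv av bv by auto
  have nu: "{j. E u j} = {v,a}" using adj vN uN uv ua av bv by auto
  have na: "{j. E a j} = {u,b}" using adj aN bN uN ua av bv ab by auto
  have nb: "{j. E b j} = {a}" using adj aN bN uN ua av bv ab by auto
  have nl: "{j. E l j} = {v}" if "l \<in> N" "l \<noteq> u" for l using adj that vN aN bN by auto
  have no: "{j. E i j} = {}" if "i \<notin> N" "i \<noteq> v" "i \<noteq> a" "i \<noteq> b" for i using adj that uN by auto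
  have dv: "deg E v = d" using nv cN by (simp add: deg_def)
  have du: "deg E u = 2" using nu av by (simp add: deg_def)
  have da: "deg E a = 2" using na ua by (simp add: deg_def)
  have db: "deg E b = 1" using nb by (simp add: deg_def)
  have dl: "deg E l = 1" if "l \<in> N" "l \<noteq> u" for l using nl[OF that] by (simp add: deg_def)
  define D where "D = real d"
  have D3: "D \<ge> 3" using d3 D_def by simp
  define T where "T = D - 3/5"
  define t where "t = sqrt T"
  define m where "m = sqrt ((D - 1)/D)"
  define h where "h = sqrt (1/2::real)"
  define \<alpha> where "\<alpha> = (2*T-1)/(2*T-2)"
  have T0: "T > 0" "2*T-2 > 0" "2*T - 1 > 0" using D3 T_def by auto
  have t0: "t > 0" using T0 t_def by simp
  have tt: "t * t = T" using T0 t_def by simp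
  have h0: "h > 0" and hh: "h * h = 1/2" unfolding h_def by (simp_all add: real_sqrt_mult[symmetric])
  have m0: "m > 0" and mm: "m * m = (D-1)/D" using D3 unfolding m_def by (simp_all add: real_sqrt_mult[symmetric])
  have al0: "\<alpha> > 0" using T0 \<alpha>_def by simp
  have wd1: "wt d 1 = m" "wt 1 d = m" using d3 wt_d1[of d] wt_sym[of 1 d] by (simp_all add: m_def D_def)
  have wd1': "wt d (Suc 0) = m" "wt (Suc 0) d = m" using wd1 by simp_all
  have wd2: "wt d 2 = h" "wt 2 d = h" using d3 wt_d2[of d] wt_sym[of 2 d] by (simp_all add: h_def)
  have w22: "wt 2 2 = h" "wt 2 1 = h" "wt 1 2 = h" using wt_d2[of 2] wt_d2[of 1] wt_sym[of 1 2] by (simp_all add: h_def)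
  have w22': "wt 2 (Suc 0) = h" "wt (Suc 0) 2 = h" using w22 by simp_all
  define y where "y i = (if i = v then 1 else if i = u then h*\<alpha>/t else if i = a then 1/(2*T-2)
      else if i = b then h/(t*(2*T-2)) else if i \<in> N then m/t else 1)" for i
  have ypos: "y i > 0" for i using t0 h0 m0 al0 T0 by (simp add: y_def)
  have yv: "y v = 1" and yu: "y u = h*\<alpha>/t" and ya: "y a = 1/(2*T-2)" and yb: "y b = h/(t*(2*T-2))"
    using uv ua av bv ab by (simp_all add: y_def)
  have yl: "y l = m/t" if "l \<in> N" "l \<noteq> u" for l using that vN aN bN by (auto simp: y_def)
  have row: "(\<Sum>j\<in>UNIV. abc_matrix E $ i $ j * y j) \<le> t * y i" for i
  proof -
    consider "i = v" | "i = u" | "i = a" | "i = b" | "i \<in> N" "i \<noteq> u" | "i \<notin> N" "i \<noteq> v" "i \<noteq> a" "i \<noteq> b"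
      using uN by blast
    then show ?thesis
    proof cases
      case 1
      have "(\<Sum>j\<in>N. wt d (deg E j) * y j) = wt d (deg E u) * y u + (\<Sum>j\<in>N-{u}. wt d (deg E j) * y j)"
        using uN by (simp add: sum.remove)
      also have "(\<Sum>j\<in>N-{u}. wt d (deg E j) * y j) = (\<Sum>j\<in>N-{u}. m * (m/t))"
        by (rule sum.cong) (auto simp: dl yl wd1 wd1')
      also have "\<dots> = (D - 1) * (m * (m / t))" using cN uN d3 by (simp add: D_def of_nat_diff)
      finally have "(\<Sum>j\<in>N. wt d (deg E j) * y j) = (h*h*\<alpha> + (D-1)*(m*m))/t"
        using t0 by (simp add: du yu wd2 field_simps)
      also have "\<dots> = (\<alpha>/2 + (D-1)*(D-1)/D)/t" by (simp add: hh mm)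
      also have "\<dots> \<le> T / t" using K4[OF D3] t0 unfolding \<alpha>_def T_def by (simp add: divide_right_mono)
      also have "\<dots> = t * y i" using 1 tt t0 yv by (simp add: field_simps)
      finally show ?thesis using 1 by (simp add: abc_row nv dv)
    next
      case 2
      have "(\<Sum>j\<in>{v,a}. wt 2 (deg E j) * y j) = h + h * (1/(2*T-2))"
        using av by (simp add: dv da yv ya wd2 w22 w22')
      also have "\<dots> = h * \<alpha>" using T0 unfolding \<alpha>_def by (simp add: field_simps)
      also have "\<dots> = t * y i" using 2 t0 yu by simp
      finally show ?thesis using 2 by (simp add: abc_row nu du)
    next
      case 3
      have "(\<Sum>j\<in>{u,b}. wt 2 (deg E j) * y j) = h * (h*\<alpha>/t) + h * (h/(t*(2*T-2)))"
        using ua by (simp add: du db yu yb w22 w22')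
      also have "\<dots> = (h*h) * (\<alpha> + 1/(2*T-2)) / t" using t0 T0 by (simp add: field_simps)
      also have "\<dots> = (t*t) / (t * (2*T-2))" using T0 t0 unfolding hh tt \<alpha>_def by (simp add: field_simps)
      also have "\<dots> = t * y i" using 3 t0 ya by simp
      finally show ?thesis using 3 by (simp add: abc_row na da)
    next
      case 4
      show ?thesis using 4 t0 by (simp add: abc_row nb db da ya yb w22 w22')
    next
      case 5
      show ?thesis using 5 t0 by (simp add: abc_row nl dl dv yv yl wd1 wd1')
    next
      case 6
      show ?thesis using 6 t0 ypos[of i] by (simp add: abc_row no)
    qed
  qed
  have bound: "\<forall>c\<in>real_eigenvalues (abc_matrix E). c \<le> t"
  proof
    fix c assume "c \<in> real_eigenvalues (abc_matrix E)"
    then obtain x where "x \<noteq> 0" "abc_matrix E *v x = c *\<^sub>R x" unfolding real_eigenvalues_def by blast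
    thus "c \<le> t" using cert[of "abc_matrix E" y t x c] abc_nonneg[of E, OF sym] ypos row by blast
  qed
  have "card (N - {u}) \<ge> 2" using cN uN d3 by simp
  then obtain l1 l2 where l: "l1 \<in> N - {u}" "l2 \<in> N - {u}" "l1 \<noteq> l2" by (rule card2_ex)
  have "\<And>i. E i l1 = E i l2" using nl l sym by (metis Diff_iff insertCI mem_Collect_eq singletonD)
  moreover have "deg E l1 = deg E l2" using dl l by simp
  ultimately have "0 \<in> real_eigenvalues (abc_matrix E)" using zero_eig l(3) by blast
  thus ?thesis using bound t_def T_def D_def by auto
qed

lemma abc_entry: "abc_matrix E $ i $ j = (if E i j then wt (deg E i) (deg E j) else 0)"
  unfolding abc_matrix_def wt_def by simp

lemma shape2:
  fixes E :: "'a::finite \<Rightarrow> 'a \<Rightarrow> bool"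
  assumes adj: "\<And>x y. E x y \<longleftrightarrow> (x=v \<and> y\<in>N) \<or> (y=v \<and> x\<in>N) \<or> (x=u \<and> y=a) \<or> (x=a \<and> y=u) \<or> (x=u \<and> y=b) \<or> (x=b \<and> y=u)"
    and uN: "u\<in>N" and vN: "v\<notin>N" and aN: "a\<notin>N" and bN: "b\<notin>N"
    and av: "a\<noteq>v" and bv: "b\<noteq>v" and ab: "a\<noteq>b" and cN: "card N = d" and d3: "d\<ge>3"
  shows "(\<forall>c\<in>real_eigenvalues (abc_matrix E). c \<le> sqrt (real d - 3/5)) \<and> real_eigenvalues (abc_matrix E) \<noteq> {}"
proof -
  have sym: "\<And>x y. E x y \<Longrightarrow> E y x" using adj by blast
  have uv: "u \<noteq> v" using uN vN by auto
  have ua: "u \<noteq> a" "u \<noteq> b" using uN aN bN by auto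
  have nv: "{j. E v j} = N" using adj vN uv av bv by auto
  have nu: "{j. E u j} = {v,a,b}" using adj vN uN uv ua av bv by auto
  have na: "{j. E a j} = {u}" using adj aN bN uN ua av bv ab by auto
  have nb: "{j. E b j} = {u}" using adj aN bN uN ua av bv ab by auto
  have nl: "{j. E l j} = {v}" if "l \<in> N" "l \<noteq> u" for l using adj that vN aN bN by auto
  have no: "{j. E i j} = {}" if "i \<notin> N" "i \<noteq> v" "i \<noteq> u" "i \<noteq> a" "i \<noteq> b" for i using adj that uN by auto
  have dv: "deg E v = d" using nv cN by (simp add: deg_def)
  have du: "deg E u = 3" using nu av bv ab by (simp add: deg_def)
  have da: "deg E a = 1" using na by (simp add: deg_def)
  have db: "deg E b = 1" using nb by (simp add: deg_def)
  have dl: "deg E l = 1" if "l \<in> N" "l \<noteq> u" for l using nl[OF that] by (simp add: deg_def)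
  define D where "D = real d"
  have D3: "D \<ge> 3" using d3 D_def by simp
  define T where "T = D - 3/5"
  define t where "t = sqrt T"
  define m where "m = sqrt ((D - 1)/D)"
  define g where "g = sqrt ((D + 1)/(3*D))"
  define k where "k = sqrt (2/3::real)"
  have T0: "T > 0" "T - 4/3 > 0" using D3 T_def by auto
  have t0: "t > 0" using T0 t_def by simp
  have tt: "t * t = T" using T0 t_def by simp
  have k0: "k > 0" and kk: "k * k = 2/3" unfolding k_def by (simp_all add: real_sqrt_mult[symmetric])
  have g0: "g > 0" and gg: "g * g = (D+1)/(3*D)" using D3 unfolding g_def by (simp_all add: real_sqrt_mult[symmetric])
  have m0: "m > 0" and mm: "m * m = (D-1)/D" using D3 unfolding m_def by (simp_all add: real_sqrt_mult[symmetric])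
  have wd1: "wt d 1 = m" "wt 1 d = m" using d3 wt_d1[of d] wt_sym[of 1 d] by (simp_all add: m_def D_def)
  have wd1': "wt d (Suc 0) = m" "wt (Suc 0) d = m" using wd1 by simp_all
  have wd3: "wt d 3 = g" "wt 3 d = g" using d3 wt_d3[of d] wt_sym[of 3 d] by (simp_all add: g_def D_def)
  have w31: "wt 3 1 = k" "wt 1 3 = k" "wt 3 (Suc 0) = k" "wt (Suc 0) 3 = k"
    using wt_31 wt_sym[of 1 3] by (simp_all add: k_def)
  define y where "y i = (if i = v then 1 else if i = u then g*t/(T-4/3) else if i = a then k*g/(T-4/3)
      else if i = b then k*g/(T-4/3) else if i \<in> N then m/t else 1)" for i
  have ypos: "y i > 0" for i using t0 g0 k0 m0 T0 by (simp add: y_def)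
  have yv: "y v = 1" and yu: "y u = g*t/(T-4/3)" and ya: "y a = k*g/(T-4/3)" and yb: "y b = k*g/(T-4/3)"
    using uv ua av bv ab by (simp_all add: y_def)
  have yl: "y l = m/t" if "l \<in> N" "l \<noteq> u" for l using that vN aN bN by (auto simp: y_def)
  have row: "(\<Sum>j\<in>UNIV. abc_matrix E $ i $ j * y j) \<le> t * y i" for i
  proof -
    consider "i = v" | "i = u" | "i = a" | "i = b" | "i \<in> N" "i \<noteq> u" | "i \<notin> N" "i \<noteq> v" "i \<noteq> u" "i \<noteq> a" "i \<noteq> b"
      using uN by blast
    then show ?thesis
    proof cases
      case 1
      have "(\<Sum>j\<in>N. wt d (deg E j) * y j) = wt d (deg E u) * y u + (\<Sum>j\<in>N-{u}. wt d (deg E j) * y j)"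
        using uN by (simp add: sum.remove)
      also have "(\<Sum>j\<in>N-{u}. wt d (deg E j) * y j) = (\<Sum>j\<in>N-{u}. m * (m/t))"
        by (rule sum.cong) (auto simp: dl yl wd1 wd1')
      also have "\<dots> = (D - 1) * (m * (m / t))" using cN uN d3 by (simp add: D_def of_nat_diff)
      finally have "(\<Sum>j\<in>N. wt d (deg E j) * y j) = ((g*g)*(t*t)/(T-4/3) + (D-1)*(m*m))/t"
        using t0 T0 by (simp add: du yu wd3 field_simps)
      also have "\<dots> = ((D-1)*(D-1)/D + ((D+1)/(3*D)) * (T/(T-4/3)))/t" by (simp add: gg mm tt)
      also have "\<dots> \<le> T / t" using K2[OF D3] t0 unfolding T_def by (simp add: divide_right_mono)
      also have "\<dots> = t * y i" using 1 tt t0 yv by (simp add: field_simps)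
      finally show ?thesis using 1 by (simp add: abc_row nv dv)
    next
      case 2
      have "(\<Sum>j\<in>{v,a,b}. wt 3 (deg E j) * y j) = g + 2 * (k*k) * g/(T-4/3)"
        using av bv ab by (simp add: dv da db yv ya yb wd3 w31 field_simps)
      also have "\<dots> = g * T / (T - 4/3)" using T0 unfolding kk by (simp add: field_simps)
      also have "\<dots> = t * y i" using 2 t0 tt yu by (simp add: field_simps)
      finally show ?thesis using 2 by (simp add: abc_row nu du)
    next
      case 3
      have "(\<Sum>j\<in>UNIV. abc_matrix E $ i $ j * y j) = k * (g*t/(T-4/3))"
        using 3 by (simp add: abc_row na da du yu w31)
      also have "\<dots> = t * y i" using 3 by (simp add: ya)
      finally show ?thesis by simp
    next
      case 4
      have "(\<Sum>j\<in>UNIV. abc_matrix E $ i $ j * y j) = k * (g*t/(T-4/3))"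
        using 4 by (simp add: abc_row nb db du yu w31)
      also have "\<dots> = t * y i" using 4 by (simp add: yb)
      finally show ?thesis by simp
    next
      case 5
      show ?thesis using 5 t0 by (simp add: abc_row nl dl dv yv yl wd1 wd1')
    next
      case 6
      show ?thesis using 6 t0 ypos[of i] by (simp add: abc_row no)
    qed
  qed
  have bound: "\<forall>c\<in>real_eigenvalues (abc_matrix E). c \<le> t"
  proof
    fix c assume "c \<in> real_eigenvalues (abc_matrix E)"
    then obtain x where "x \<noteq> 0" "abc_matrix E *v x = c *\<^sub>R x" unfolding real_eigenvalues_def by blast
    thus "c \<le> t" using cert[of "abc_matrix E" y t x c] abc_nonneg[of E, OF sym] ypos row by blast
  qed
  have "\<And>i. E i a = E i b" using na nb sym by (metis insertI1 mem_Collect_eq singletonD)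
  hence "0 \<in> real_eigenvalues (abc_matrix E)" using zero_eig ab da db by metis
  thus ?thesis using bound t_def T_def D_def by auto
qed

lemma shape3:
  fixes E :: "'a::finite \<Rightarrow> 'a \<Rightarrow> bool"
  assumes adj: "\<And>x y. E x y \<longleftrightarrow> (x=v \<and> y\<in>N) \<or> (y=v \<and> x\<in>N) \<or> (x=u1 \<and> y=a) \<or> (x=a \<and> y=u1) \<or> (x=u2 \<and> y=b) \<or> (x=b \<and> y=u2)"
    and u1N: "u1\<in>N" and u2N: "u2\<in>N" and u12: "u1 \<noteq> u2" and vN: "v\<notin>N" and aN: "a\<notin>N" and bN: "b\<notin>N"
    and av: "a\<noteq>v" and bv: "b\<noteq>v" and ab: "a\<noteq>b" and cN: "card N = d" and d3: "d\<ge>3"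
  shows "(\<forall>c\<in>real_eigenvalues (abc_matrix E). c \<le> sqrt (real d - 3/5)) \<and> real_eigenvalues (abc_matrix E) \<noteq> {}"
proof -
  have sym: "\<And>x y. E x y \<Longrightarrow> E y x" using adj by blast
  have uv: "u1 \<noteq> v" "u2 \<noteq> v" using u1N u2N vN by auto
  have ua: "u1 \<noteq> a" "u1 \<noteq> b" "u2 \<noteq> a" "u2 \<noteq> b" using u1N u2N aN bN by auto
  have nv: "{j. E v j} = N" using adj vN uv av bv by auto
  have nu1: "{j. E u1 j} = {v,a}" using adj vN u1N uv ua av bv u12 by auto
  have nu2: "{j. E u2 j} = {v,b}" using adj vN u2N uv ua av bv u12 by auto
  have na: "{j. E a j} = {u1}" using adj aN bN ua av bv ab by auto
  have nb: "{j. E b j} = {u2}" using adj aN bN ua av bv ab by auto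
  have nl: "{j. E l j} = {v}" if "l \<in> N" "l \<noteq> u1" "l \<noteq> u2" for l using adj that vN aN bN by auto
  have no: "{j. E i j} = {}" if "i \<notin> N" "i \<noteq> v" "i \<noteq> a" "i \<noteq> b" for i using adj that u1N u2N by auto
  have dv: "deg E v = d" using nv cN by (simp add: deg_def)
  have du1: "deg E u1 = 2" using nu1 av by (simp add: deg_def)
  have du2: "deg E u2 = 2" using nu2 bv by (simp add: deg_def)
  have da: "deg E a = 1" using na by (simp add: deg_def)
  have db: "deg E b = 1" using nb by (simp add: deg_def)
  have dl: "deg E l = 1" if "l \<in> N" "l \<noteq> u1" "l \<noteq> u2" for l using nl[OF that] by (simp add: deg_def)
  define D where "D = real d"
  have D3: "D \<ge> 3" using d3 D_def by simp
  define T where "T = D - 3/5"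
  define t where "t = sqrt T"
  define m where "m = sqrt ((D - 1)/D)"
  define h where "h = sqrt (1/2::real)"
  have T0: "T > 0" "T - 1/2 > 0" "2*T - 1 > 0" using D3 T_def by auto
  have t0: "t > 0" using T0 t_def by simp
  have tt: "t * t = T" using T0 t_def by simp
  have h0: "h > 0" and hh: "h * h = 1/2" unfolding h_def by (simp_all add: real_sqrt_mult[symmetric])
  have m0: "m > 0" and mm: "m * m = (D-1)/D" using D3 unfolding m_def by (simp_all add: real_sqrt_mult[symmetric])
  have wd1: "wt d 1 = m" "wt 1 d = m" using d3 wt_d1[of d] wt_sym[of 1 d] by (simp_all add: m_def D_def)
  have wd1': "wt d (Suc 0) = m" "wt (Suc 0) d = m" using wd1 by simp_all
  have wd2: "wt d 2 = h" "wt 2 d = h" using d3 wt_d2[of d] wt_sym[of 2 d] by (simp_all add: h_def)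
  have w22: "wt 2 2 = h" "wt 2 1 = h" "wt 1 2 = h" using wt_d2[of 2] wt_d2[of 1] wt_sym[of 1 2] by (simp_all add: h_def)
  have w22': "wt 2 (Suc 0) = h" "wt (Suc 0) 2 = h" using w22 by simp_all
  define y where "y i = (if i = v then 1 else if i = u1 then h*t/(T-1/2) else if i = u2 then h*t/(T-1/2)
      else if i = a then 1/(2*T-1) else if i = b then 1/(2*T-1) else if i \<in> N then m/t else 1)" for i
  have ypos: "y i > 0" for i using t0 h0 m0 T0 by (simp add: y_def)
  have yv: "y v = 1" and yu1: "y u1 = h*t/(T-1/2)" and yu2: "y u2 = h*t/(T-1/2)"
    and ya: "y a = 1/(2*T-1)" and yb: "y b = 1/(2*T-1)"
    using uv ua av bv ab u12 by (simp_all add: y_def)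
  have yl: "y l = m/t" if "l \<in> N" "l \<noteq> u1" "l \<noteq> u2" for l using that vN aN bN by (auto simp: y_def)
  have row: "(\<Sum>j\<in>UNIV. abc_matrix E $ i $ j * y j) \<le> t * y i" for i
  proof -
    consider "i = v" | "i = u1" | "i = u2" | "i = a" | "i = b" | "i \<in> N" "i \<noteq> u1" "i \<noteq> u2" | "i \<notin> N" "i \<noteq> v" "i \<noteq> a" "i \<noteq> b"
      using u1N u2N by blast
    then show ?thesis
    proof cases
      case 1
      have "(\<Sum>j\<in>N. wt d (deg E j) * y j) = wt d (deg E u1) * y u1 + (\<Sum>j\<in>N-{u1}. wt d (deg E j) * y j)"
        using u1N by (simp add: sum.remove)
      also have "(\<Sum>j\<in>N-{u1}. wt d (deg E j) * y j) = wt d (deg E u2) * y u2 + (\<Sum>j\<in>N-{u1}-{u2}. wt d (deg E j) * y j)"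
        by (rule sum.remove) (use u2N u12 in auto)
      also have "(\<Sum>j\<in>N-{u1}-{u2}. wt d (deg E j) * y j) = (\<Sum>j\<in>N-{u1}-{u2}. m * (m/t))"
        by (rule sum.cong) (auto simp: dl yl wd1 wd1')
      also have "\<dots> = (D - 2) * (m * (m / t))" using cN u1N u2N u12 d3 by (simp add: D_def of_nat_diff)
      finally have "(\<Sum>j\<in>N. wt d (deg E j) * y j) = h*(h*t/(T-1/2)) + (h*(h*t/(T-1/2)) + (D-2)*(m*(m/t)))"
        by (simp add: du1 du2 yu1 yu2 wd2)
      also have "h*(h*t/(T-1/2)) = (T/(T-1/2))/t/2"
      proof -
        have "h*(h*t/(T-1/2)) = (h*h)*t/(T-1/2)" by (simp add: mult.assoc)
        also have "\<dots> = t/(T-1/2)/2" by (simp add: hh)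
        also have "t/(T-1/2) = (t*t)/(T-1/2)/t" using t0 by simp
        also have "\<dots> = T/(T-1/2)/t" by (simp only: tt)
        finally show ?thesis .
      qed
      also have "(D-2)*(m*(m/t)) = ((D-2)*(D-1)/D)/t"
      proof -
        have "(D-2)*(m*(m/t)) = (D-2)*(m*m)/t" by simp
        thus ?thesis by (simp add: mm)
      qed
      finally have "(\<Sum>j\<in>N. wt d (deg E j) * y j) = (T/(T-1/2))/t/2 + ((T/(T-1/2))/t/2 + ((D-2)*(D-1)/D)/t)" .
      also have "\<dots> = ((D-2)*(D-1)/D + T/(T-1/2))/t"
        using add_divide_distrib[of "(D-2)*(D-1)/D" "T/(T-1/2)" t] by linarith
      also have "\<dots> \<le> T / t" using K3[OF D3] t0 unfolding T_def by (simp add: divide_right_mono)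
      also have "\<dots> = t * y i" using 1 tt t0 yv by (simp add: field_simps)
      finally show ?thesis using 1 by (simp add: abc_row nv dv)
    next
      case 2
      have "(\<Sum>j\<in>UNIV. abc_matrix E $ i $ j * y j) = h + h * (1/(2*T-1))"
        using 2 av by (simp add: abc_row nu1 du1 dv da yv ya wd2 w22 w22')
      also have "\<dots> = h * t * t / (T - 1/2)" using T0 tt by (simp add: field_simps)
      also have "\<dots> = t * y i" using 2 yu1 by simp
      finally show ?thesis by simp
    next
      case 3
      have "(\<Sum>j\<in>UNIV. abc_matrix E $ i $ j * y j) = h + h * (1/(2*T-1))"
        using 3 bv by (simp add: abc_row nu2 du2 dv db yv yb wd2 w22 w22')
      also have "\<dots> = h * t * t / (T - 1/2)" using T0 tt by (simp add: field_simps)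
      also have "\<dots> = t * y i" using 3 yu2 by simp
      finally show ?thesis by simp
    next
      case 4
      have "(\<Sum>j\<in>UNIV. abc_matrix E $ i $ j * y j) = h * (h*t/(T-1/2))"
        using 4 by (simp add: abc_row na da du1 yu1 w22 w22')
      also have "\<dots> = t * y i" using 4 ya T0 hh by (simp add: field_simps)
      finally show ?thesis by simp
    next
      case 5
      have "(\<Sum>j\<in>UNIV. abc_matrix E $ i $ j * y j) = h * (h*t/(T-1/2))"
        using 5 by (simp add: abc_row nb db du2 yu2 w22 w22')
      also have "\<dots> = t * y i" using 5 yb T0 hh by (simp add: field_simps)
      finally show ?thesis by simp
    next
      case 6
      show ?thesis using 6 t0 by (simp add: abc_row nl dl dv yv yl wd1 wd1')
    next
      case 7
      show ?thesis using 7 t0 ypos[of i] by (simp add: abc_row no)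
    qed
  qed
  have bound: "\<forall>c\<in>real_eigenvalues (abc_matrix E). c \<le> t"
  proof
    fix c assume "c \<in> real_eigenvalues (abc_matrix E)"
    then obtain x where "x \<noteq> 0" "abc_matrix E *v x = c *\<^sub>R x" unfolding real_eigenvalues_def by blast
    thus "c \<le> t" using cert[of "abc_matrix E" y t x c] abc_nonneg[of E, OF sym] ypos row by blast
  qed
  let ?x = "(\<chi> j. if j = u1 \<or> j = a then 1 else if j = u2 \<or> j = b then -1 else (0::real))"
  have "?x $ u1 = 1" by simp
  hence nz: "?x \<noteq> 0" by (metis zero_index zero_neq_one)
  have "abc_matrix E *v ?x = h *\<^sub>R ?x"
  proof (subst vec_eq_iff, intro allI)
    fix i
    have "(abc_matrix E *v ?x) $ i = (\<Sum>j\<in>UNIV. abc_matrix E $ i $ j * ?x $ j)"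
      by (simp add: matrix_vector_mult_def)
    also have "\<dots> = (\<Sum>j\<in>{j. E i j}. wt (deg E i) (deg E j) * ?x $ j)" by (rule abc_row)
    also have "\<dots> = (h *\<^sub>R ?x) $ i"
    proof -
      consider "i = v" | "i = u1" | "i = u2" | "i = a" | "i = b" | "i \<in> N" "i \<noteq> u1" "i \<noteq> u2" | "i \<notin> N" "i \<noteq> v" "i \<noteq> a" "i \<noteq> b"
        using u1N u2N by blast
      then show ?thesis
      proof cases
        case 1
        have "(\<Sum>j\<in>N. wt d (deg E j) * ?x $ j) = wt d (deg E u1) * ?x $ u1 + (\<Sum>j\<in>N-{u1}. wt d (deg E j) * ?x $ j)"
          using u1N by (simp add: sum.remove)
        also have "(\<Sum>j\<in>N-{u1}. wt d (deg E j) * ?x $ j) = wt d (deg E u2) * ?x $ u2 + (\<Sum>j\<in>N-{u1}-{u2}. wt d (deg E j) * ?x $ j)"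
          by (rule sum.remove) (use u2N u12 in auto)
        also have "(\<Sum>j\<in>N-{u1}-{u2}. wt d (deg E j) * ?x $ j) = 0"
          using aN bN by (intro sum.neutral) auto
        finally show ?thesis using 1 u12 ua uv av bv by (simp add: nv dv du1 du2)
      qed (use u12 ua uv av bv ab aN bN u1N u2N in \<open>auto simp add: nu1 nu2 na nb nl no du1 du2 da db dv w22 w22' wd2 field_simps\<close>)
    qed
    finally show "(abc_matrix E *v ?x) $ i = (h *\<^sub>R ?x) $ i" .
  qed
  hence "h \<in> real_eigenvalues (abc_matrix E)" using nz unfolding real_eigenvalues_def by blast
  thus ?thesis using bound t_def T_def D_def by auto
qed

lemma finish:
  fixes E :: "'a::finite \<Rightarrow> 'a \<Rightarrow> bool"
  assumes sym: "\<And>x y. E x y \<Longrightarrow> E y x"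
    and b: "(\<forall>c\<in>real_eigenvalues (abc_matrix E). c \<le> sqrt (real d - 3/5)) \<and> real_eigenvalues (abc_matrix E) \<noteq> {}"
    and n: "CARD('a) = d + 3"
  shows "abc_spectral_radius E < sqrt (real CARD('a) - 3.5)"
proof -
  let ?S = "real_eigenvalues (abc_matrix E)"
  have fin: "finite ?S" using finite_eig abc_sym[of E, OF sym] by blast
  have "Max ?S \<in> ?S" using fin b by (intro Max_in) auto
  hence "Max ?S \<le> sqrt (real d - 3/5)" using b by blast
  also have "\<dots> < sqrt (real CARD('a) - 3.5)" using n by simp
  finally show ?thesis unfolding abc_spectral_radius_def .
qed

lemma cyc3: "E x y \<Longrightarrow> E y z \<Longrightarrow> E z x \<Longrightarrow> distinct [x,y,z] \<Longrightarrow> is_cycle E [x,y,z]"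
  unfolding is_cycle_def by (auto simp: less_Suc_eq nth_Cons split: nat.split)
lemma cyc4: "E x y \<Longrightarrow> E y z \<Longrightarrow> E z w \<Longrightarrow> E w x \<Longrightarrow> distinct [x,y,z,w] \<Longrightarrow> is_cycle E [x,y,z,w]"
  unfolding is_cycle_def by (auto simp: less_Suc_eq nth_Cons split: nat.split)
lemma cyc5: "E x y \<Longrightarrow> E y z \<Longrightarrow> E z w \<Longrightarrow> E w q \<Longrightarrow> E q x \<Longrightarrow> distinct [x,y,z,w,q] \<Longrightarrow> is_cycle E [x,y,z,w,q]"
  unfolding is_cycle_def by (auto simp: less_Suc_eq nth_Cons split: nat.split)

theorem lemma3p4:
  fixes E :: "'a::finite \<Rightarrow> 'a \<Rightarrow> bool"
  assumes "CARD('a) \<ge> 6"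
    and "is_tree E"
    and "max_degree E = CARD('a) - 3"
  shows "abc_spectral_radius E < sqrt (real CARD('a) - 3.5)"
proof -
  define n where "n = CARD('a)"
  define d where "d = n - 3"
  have n6: "n \<ge> 6" using assms(1) n_def by simp
  have d3: "d \<ge> 3" and nd: "CARD('a) = d + 3" using n6 n_def d_def by auto
  have sym: "\<And>x y. E x y \<Longrightarrow> E y x" and irr: "\<And>x. \<not> E x x"
    using assms(2) unfolding is_tree_def simple_graph_def by blast+
  have conn: "E\<^sup>*\<^sup>* x y" for x y using assms(2) unfolding is_tree_def connected_graph_def by blast
  have acyc: "\<not> is_cycle E cs" for cs using assms(2) unfolding is_tree_def acyclic_graph_def by blast
  have "Max (range (deg E)) \<in> range (deg E)" by (rule Max_in) auto
  then obtain v where dv: "deg E v = d" using assms(3) unfolding max_degree_def n_def d_def by auto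
  define N where "N = {u. E v u}"
  have cN: "card N = d" using dv unfolding N_def deg_def .
  have vN: "v \<notin> N" using irr N_def by auto
  define R where "R = UNIV - insert v N"
  have "card R = 2"
  proof -
    have "card R = card (UNIV::'a set) - card (insert v N)" unfolding R_def by (rule card_Diff_subset) auto
    also have "card (insert v N) = d + 1" using vN cN by simp
    finally show ?thesis using nd by simp
  qed
  then obtain a b where R: "R = {a,b}" and ab: "a \<noteq> b" by (auto simp: card_2_iff)
  have aN: "a \<notin> N" "a \<noteq> v" and bN: "b \<notin> N" "b \<noteq> v" using R unfolding R_def by auto
  have cls: "x = v \<or> x \<in> N \<or> x = a \<or> x = b" for x using R unfolding R_def by auto
  have Ev: "E v y \<longleftrightarrow> y \<in> N" "E y v \<longleftrightarrow> y \<in> N" for y using sym N_def by auto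
  have ENN: "\<not> E x y" if "x \<in> N" "y \<in> N" for x y
  proof
    assume "E x y"
    hence "is_cycle E [v,x,y]" using that irr vN sym
      by (intro cyc3) (auto simp: N_def)
    thus False using acyc by blast
  qed
  have uniq: "u1 = u2" if "u1 \<in> N" "u2 \<in> N" "E u1 r" "E u2 r" "r \<notin> N" "r \<noteq> v" for u1 u2 r
  proof (rule ccontr)
    assume "u1 \<noteq> u2"
    hence "is_cycle E [v,u1,r,u2]" using that vN sym
      by (intro cyc4) (auto simp: N_def)
    thus False using acyc by blast
  qed
  have F3: "\<not> E a b" if "u \<in> N" "E u a" "E u b" for u
  proof
    assume "E a b"
    hence "is_cycle E [u,a,b]" using that aN bN ab sym by (intro cyc3) auto
    thus False using acyc by blast
  qed
  have F4: "\<not> E a b" if "u1 \<in> N" "u2 \<in> N" "u1 \<noteq> u2" "E u1 a" "E u2 b" for u1 u2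
  proof
    assume "E a b"
    hence "is_cycle E [v,u1,a,b,u2]" using that aN bN ab sym vN by (intro cyc5) (auto simp: N_def)
    thus False using acyc by blast
  qed
  have C1: "\<exists>y. E x y" if "x \<noteq> v" for x
    using conn[of x v] that by (metis converse_rtranclpE)
  have C2: False if "E a b" "\<And>u. u \<in> N \<Longrightarrow> \<not> E u a" "\<And>u. u \<in> N \<Longrightarrow> \<not> E u b"
  proof -
    have stp: "y \<in> {a,b}" if "z \<in> {a,b}" "E z y" for z y
      using cls[of y] that Ev aN bN sym \<open>\<And>u. u \<in> N \<Longrightarrow> \<not> E u a\<close> \<open>\<And>u. u \<in> N \<Longrightarrow> \<not> E u b\<close> by blast
    have "E\<^sup>*\<^sup>* a v" by (rule conn)
    hence "v \<in> {a,b}"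
    proof (induction rule: rtranclp_induct)
      case (step y z) thus ?case using stp by blast
    qed simp
    thus False using aN bN by auto
  qed
  have nbrN: "\<exists>u. u \<in> N \<and> E u r" if rr: "r \<in> {a,b}" "\<not> E a b" for r
  proof -
    obtain y where y: "E r y" using C1[of r] rr aN bN by auto
    have "y \<noteq> v" using y Ev that aN bN by auto
    moreover have "y \<noteq> r" using y irr by auto
    moreover have "y \<notin> {a,b} - {r}" using y that sym by auto
    ultimately have "y \<in> N" using cls[of y] that by auto
    thus ?thesis using y sym by auto
  qed
  show ?thesis
  proof (cases "E a b")
    case True
    consider (A) u where "u \<in> N" "E u a" "\<And>w. w \<in> N \<Longrightarrow> \<not> E w b"
      | (B) u where "u \<in> N" "E u b" "\<And>w. w \<in> N \<Longrightarrow> \<not> E w a"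
    proof -
      have "\<not> ((\<exists>u\<in>N. E u a) \<and> (\<exists>u\<in>N. E u b))"
      proof
        assume "(\<exists>u\<in>N. E u a) \<and> (\<exists>u\<in>N. E u b)"
        then obtain u1 u2 where "u1 \<in> N" "E u1 a" "u2 \<in> N" "E u2 b" by blast
        thus False using F3 F4 True by (cases "u1 = u2") auto
      qed
      moreover have "(\<exists>u\<in>N. E u a) \<or> (\<exists>u\<in>N. E u b)" using C2 True by blast
      ultimately show ?thesis using that by blast
    qed
    then show ?thesis
    proof cases
      case (A u)
      have ua: "w \<in> N \<Longrightarrow> E w a \<longleftrightarrow> w = u" for w using uniq[of w u a] A aN by blast
      have adj: "E x y \<longleftrightarrow> (x=v \<and> y\<in>N) \<or> (y=v \<and> x\<in>N) \<or> (x=u \<and> y=a) \<or> (x=a \<and> y=u) \<or> (x=a \<and> y=b) \<or> (x=b \<and> y=a)" for x y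
        using cls[of x] cls[of y] Ev ENN ua A(1,3) True sym irr aN bN ab vN
        by (elim disjE) (auto dest: sym)
      show ?thesis using shape4[OF adj A(1) vN aN(1) bN(1) aN(2) bN(2) ab cN d3] finish sym nd by blast
    next
      case (B u)
      have ub: "w \<in> N \<Longrightarrow> E w b \<longleftrightarrow> w = u" for w using uniq[of w u b] B bN by blast
      have adj: "E x y \<longleftrightarrow> (x=v \<and> y\<in>N) \<or> (y=v \<and> x\<in>N) \<or> (x=u \<and> y=b) \<or> (x=b \<and> y=u) \<or> (x=b \<and> y=a) \<or> (x=a \<and> y=b)" for x y
        using cls[of x] cls[of y] Ev ENN ub B(1,3) True sym irr aN bN ab vN
        by (elim disjE) (auto dest: sym)
      show ?thesis using shape4[OF adj B(1) vN bN(1) aN(1) bN(2) aN(2) ab[symmetric] cN d3] finish sym nd by blast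
    qed
  next
    case False
    obtain u1 where u1: "u1 \<in> N" "E u1 a" using nbrN[of a] False by auto
    obtain u2 where u2: "u2 \<in> N" "E u2 b" using nbrN[of b] False by auto
    have ua: "w \<in> N \<Longrightarrow> E w a \<longleftrightarrow> w = u1" for w using uniq[of w u1 a] u1 aN by blast
    have ub: "w \<in> N \<Longrightarrow> E w b \<longleftrightarrow> w = u2" for w using uniq[of w u2 b] u2 bN by blast
    show ?thesis
    proof (cases "u1 = u2")
      case True
      have adj: "E x y \<longleftrightarrow> (x=v \<and> y\<in>N) \<or> (y=v \<and> x\<in>N) \<or> (x=u1 \<and> y=a) \<or> (x=a \<and> y=u1) \<or> (x=u1 \<and> y=b) \<or> (x=b \<and> y=u1)" for x y
        using cls[of x] cls[of y] Ev ENN ua ub True False sym irr aN bN ab vN u1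
        by (elim disjE) (auto dest: sym)
      show ?thesis using shape2[OF adj u1(1) vN aN(1) bN(1) aN(2) bN(2) ab cN d3] finish sym nd by blast
    next
      case ne: False
      have adj: "E x y \<longleftrightarrow> (x=v \<and> y\<in>N) \<or> (y=v \<and> x\<in>N) \<or> (x=u1 \<and> y=a) \<or> (x=a \<and> y=u1) \<or> (x=u2 \<and> y=b) \<or> (x=b \<and> y=u2)" for x y
        using cls[of x] cls[of y] Ev ENN ua ub False sym irr aN bN ab vN u1 u2
        by (elim disjE) (auto dest: sym)
      show ?thesis using shape3[OF adj u1(1) u2(1) ne vN aN(1) bN(1) aN(2) bN(2) ab cN d3] finish sym nd by blast
    qed
  qed
qed

end
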